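(* Let $X$ be a connected weighted non-bipartite graph with vertex $u$ such that $0\in\Phi_{\mathbf e_u}(X)$. If $(E_0)_{u,u}>\frac12$, then $u$ is sedentary in $X$ and both copies $(0,u)$ and $(1,u)$ of $u$ are sedentary in $K_2\times X$. If $(E_0)_{u,u}=\frac12$, then $u$ is sedentary in $X$ if and only if its two copies $(0,u),(1,u)$ are sedentary in $K_2\times X$.
   Context: Graphs are simple, connected, undirected, with nonzero real edge weights; $A(X)$ is the weighted adjacency matrix with spectral decomposition $A(X)=\sum_\lambda\lambda E_\lambda$ over distinct eigenvalues, $E_\lambda$ the orthogonal projection onto the $\lambda$-eigenspace; $\Phi_{\mathbf e_u}(X)=\{\lambda:E_\lambda\mathbf e_u\ne0\}$. The bipartite double $K_2\times X$ is the weighted graph with vertex set $\{0,1\}\times V(X)$ and adjacency matrix $A(K_2)\otimes A(X)$; $(0,u),(1,u)$ are the two copies of $u$ (it is connected since $X$ is non-bipartite). With $U(t)=e^{itA}$, a vertex $u$ is sedentary if $\inf_{t>0}|U(t)_{u,u}|\ge C$ for some $0<C\le1$. *)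

theory Defs
  imports "HOL-Analysis.Analysis"
begin

text \<open>A weighted graph on the finite vertex type 'n is given by its weighted adjacency
matrix A :: real^'n^'n: symmetric, zero diagonal (simple), edge (i,j) iff A i j \<noteq> 0
(so edge weights are nonzero reals).\<close>

definition weighted_graph :: "real^'n^'n \<Rightarrow> bool" where
  "weighted_graph A \<longleftrightarrow> transpose A = A \<and> (\<forall>i. A $ i $ i = 0)"

definition adj :: "real^'n^'n \<Rightarrow> 'n \<Rightarrow> 'n \<Rightarrow> bool" where
  "adj A i j \<longleftrightarrow> A $ i $ j \<noteq> 0"

definition connected_graph :: "real^'n^'n \<Rightarrow> bool" where
  "connected_graph A \<longleftrightarrow> (\<forall>i j. (adj A)\<^sup>*\<^sup>* i j)"

definition bipartite :: "real^'n^'n \<Rightarrow> bool" where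
  "bipartite A \<longleftrightarrow> (\<exists>f :: 'n \<Rightarrow> bool. \<forall>i j. adj A i j \<longrightarrow> f i \<noteq> f j)"

text \<open>Orthogonal projection onto the \<lambda>-eigenspace of A (the zero matrix if \<lambda> is
not an eigenvalue, since then the eigenspace is {0}).\<close>

definition eigproj :: "real^'n^'n \<Rightarrow> real \<Rightarrow> real^'n^'n" where
  "eigproj A l = (THE P. P ** P = P \<and> transpose P = P \<and>
      range (\<lambda>x. P *v x) = {x. A *v x = l *\<^sub>R x})"

definition eigsupport :: "real^'n^'n \<Rightarrow> 'n \<Rightarrow> real set" where
  "eigsupport A u = {l. eigproj A l *v axis u 1 \<noteq> 0}"

primrec matpow :: "real^'n^'n \<Rightarrow> nat \<Rightarrow> real^'n^'n" where
  "matpow A 0 = mat 1"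
| "matpow A (Suc k) = A ** matpow A k"

text \<open>(u,v)-entry of U(t) = exp(i t A), via the exponential power series.\<close>

definition transition :: "real^'n^'n \<Rightarrow> real \<Rightarrow> 'n \<Rightarrow> 'n \<Rightarrow> complex" where
  "transition A t u v = (\<Sum>k. (\<i> * complex_of_real t) ^ k / of_nat (fact k)
                              * complex_of_real (matpow A k $ u $ v))"

definition sedentary :: "real^'n^'n \<Rightarrow> 'n \<Rightarrow> bool" where
  "sedentary A u \<longleftrightarrow> (\<exists>C. 0 < C \<and> C \<le> 1 \<and>
      (INF t\<in>{0<..}. cmod (transition A t u u)) \<ge> C)"

text \<open>Bipartite double K_2 \<times> X: vertex set {0,1} \<times> V(X), with 0 = False, 1 = True;
adjacency matrix A(K_2) \<otimes> A(X).\<close>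

definition bipartite_double :: "real^'n^'n \<Rightarrow> real^(bool \<times> 'n)^(bool \<times> 'n)" where
  "bipartite_double A = (\<chi> p q. (if fst p \<noteq> fst q then 1 else 0) * A $ snd p $ snd q)"

end

theory Submission
  imports Defs
begin
lemma sym_inner:
  fixes A :: "real^'n^'n"
  assumes "transpose A = A"
  shows "x \<bullet> (A *v y) = (A *v x) \<bullet> y"
proof -
  have "x \<bullet> (A *v y) = (x v* A) \<bullet> y" by (simp add: dot_lmul_matrix)
  also have "x v* A = transpose A *v x" by simp
  also have "\<dots> = A *v x" using assms by simp
  finally show ?thesis .
qed

lemma quad_expand:
  fixes A :: "real^'n^'n"
  assumes "transpose A = A"
  shows "(v + s *\<^sub>R r) \<bullet> (A *v (v + s *\<^sub>R r)) =
     v \<bullet> (A *v v) + 2 * s * (r \<bullet> (A *v v)) + s^2 * (r \<bullet> (A *v r))"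
proof -
  have "v \<bullet> (A *v r) = r \<bullet> (A *v v)"
    using sym_inner[OF assms, of v r] by (simp add: inner_commute)
  then show ?thesis
    by (simp add: matrix_vector_right_distrib matrix_vector_mult_scaleR inner_add_left
        inner_add_right algebra_simps power2_eq_square)
qed

lemma max_eigen:
  fixes A :: "real^'n^'n"
  assumes sym: "transpose A = A" and S: "subspace S" and inv: "\<forall>x\<in>S. A *v x \<in> S"
    and vS: "v \<in> S" and nv: "norm v = 1"
    and mx: "\<forall>y\<in>S. norm y = 1 \<longrightarrow> y \<bullet> (A *v y) \<le> v \<bullet> (A *v v)"
  shows "A *v v = (v \<bullet> (A *v v)) *\<^sub>R v"
proof -
  define m where "m = v \<bullet> (A *v v)"
  define r where "r = A *v v - m *\<^sub>R v"
  have vv: "v \<bullet> v = 1" using nv by (simp add: norm_eq_1)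
  have rS: "r \<in> S" unfolding r_def using S inv vS by (simp add: subspace_diff subspace_scale)
  have rv: "r \<bullet> v = 0" unfolding r_def m_def using vv
    by (simp add: inner_diff_left inner_diff_right inner_commute)
  have gen: "y \<bullet> (A *v y) \<le> m * (y \<bullet> y)" if "y \<in> S" for y
  proof (cases "y = 0")
    case True then show ?thesis by simp
  next
    case False
    define z where "z = (1 / norm y) *\<^sub>R y"
    have "z \<in> S" unfolding z_def using S that by (simp add: subspace_scale)
    moreover have "norm z = 1" unfolding z_def using False by simp
    ultimately have "z \<bullet> (A *v z) \<le> m" using mx m_def by auto
    also have "z \<bullet> (A *v z) = (y \<bullet> (A *v y)) / (norm y)^2"
      unfolding z_def by (simp add: matrix_vector_mult_scaleR power2_eq_square)
    finally have "y \<bullet> (A *v y) \<le> m * (norm y)^2"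
      using False by (simp add: divide_le_eq)
    then show ?thesis by (simp add: power2_norm_eq_inner)
  qed
  have rAv: "r \<bullet> (A *v v) = r \<bullet> r"
  proof -
    have "A *v v = r + m *\<^sub>R v" unfolding r_def by simp
    then show ?thesis using rv by (simp add: inner_add_right)
  qed
  define K where "K = m * (r \<bullet> r) - r \<bullet> (A *v r)"
  have key: "2 * s * (r \<bullet> r) \<le> s^2 * K" for s
  proof -
    have "v + s *\<^sub>R r \<in> S" using S vS rS by (simp add: subspace_add subspace_scale)
    then have "(v + s *\<^sub>R r) \<bullet> (A *v (v + s *\<^sub>R r)) \<le> m * ((v + s *\<^sub>R r) \<bullet> (v + s *\<^sub>R r))"
      by (rule gen)
    moreover have "(v + s *\<^sub>R r) \<bullet> (v + s *\<^sub>R r) = 1 + s^2 * (r \<bullet> r)"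
      using vv rv by (simp add: inner_add_left inner_add_right inner_commute power2_eq_square)
    moreover have "(v + s *\<^sub>R r) \<bullet> (A *v (v + s *\<^sub>R r)) = m + 2 * s * (r \<bullet> r) + s^2 * (r \<bullet> (A *v r))"
      using quad_expand[OF sym, of v s r] rAv unfolding m_def by simp
    ultimately have "m + 2 * s * (r \<bullet> r) + s^2 * (r \<bullet> (A *v r)) \<le> m * (1 + s^2 * (r \<bullet> r))"
      by simp
    then show ?thesis unfolding K_def by (simp add: algebra_simps)
  qed
  have "r \<bullet> r = 0"
  proof (rule ccontr)
    assume "r \<bullet> r \<noteq> 0"
    then have pos: "r \<bullet> r > 0" by (simp add: order_le_neq_trans)
    define s where "s = (r \<bullet> r) / (\<bar>K\<bar> + 1)"
    have s0: "s > 0" unfolding s_def using pos by simp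
    have "2 * s * (r \<bullet> r) \<le> s^2 * K" by (rule key)
    then have "2 * (r \<bullet> r) \<le> s * K" using s0 by (simp add: power2_eq_square mult.assoc)
    also have "\<dots> \<le> s * \<bar>K\<bar>" using s0 by (simp add: mult_left_mono)
    also have "\<dots> < s * (\<bar>K\<bar> + 1)" using s0 by simp
    also have "\<dots> = r \<bullet> r" unfolding s_def by simp
    finally show False using pos by simp
  qed
  then have "r = 0" by simp
  then show ?thesis unfolding r_def m_def by simp
qed


lemma spectral_sub:
  fixes A :: "real^'n^'n"
  assumes sym: "transpose A = A"
  shows "subspace S \<Longrightarrow> (\<forall>x\<in>S. A *v x \<in> S) \<Longrightarrow>
    \<exists>B. B \<subseteq> S \<and> pairwise orthogonal B \<and> (\<forall>b\<in>B. norm b = 1) \<and> span B = S \<and>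
        (\<forall>b\<in>B. A *v b = (b \<bullet> (A *v b)) *\<^sub>R b)"
proof (induction "dim S" arbitrary: S rule: less_induct)
  case less
  note S = less.prems(1) and inv = less.prems(2)
  show ?case
  proof (cases "S \<subseteq> {0}")
    case True
    then have "S = {0}" using S subspace_0 by blast
    then show ?thesis by (intro exI[of _ "{}"]) auto
  next
    case False
    then obtain x where xS: "x \<in> S" and x0: "x \<noteq> 0" by blast
    define M where "M = S \<inter> sphere 0 1"
    have cM: "compact M" unfolding M_def
      by (rule closed_Int_compact[OF closed_subspace[OF S] compact_sphere])
    have "(1 / norm x) *\<^sub>R x \<in> M" unfolding M_def using xS x0 S by (simp add: subspace_scale)
    then have neM: "M \<noteq> {}" by blast
    have cont: "continuous_on M (\<lambda>y. y \<bullet> (A *v y))"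
      by (intro continuous_intros linear_continuous_on matrix_vector_mul_linear[THEN linear_conv_bounded_linear[THEN iffD1]])
    obtain v where vM: "v \<in> M" and vmax: "\<forall>y\<in>M. y \<bullet> (A *v y) \<le> v \<bullet> (A *v v)"
      using continuous_attains_sup[OF cM neM cont] by blast
    have vS: "v \<in> S" and nv: "norm v = 1" using vM unfolding M_def by auto
    have mx: "\<forall>y\<in>S. norm y = 1 \<longrightarrow> y \<bullet> (A *v y) \<le> v \<bullet> (A *v v)"
      using vmax unfolding M_def by auto
    define m where "m = v \<bullet> (A *v v)"
    have Av: "A *v v = m *\<^sub>R v" unfolding m_def by (rule max_eigen[OF sym S inv vS nv mx])
    have vv: "v \<bullet> v = 1" using nv by (simp add: norm_eq_1)
    define S' where "S' = {y \<in> S. y \<bullet> v = 0}"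
    have S'sub: "subspace S'" unfolding S'_def subspace_def using S
      by (auto simp: subspace_0 subspace_add subspace_scale inner_add_left)
    have S'inv: "\<forall>y\<in>S'. A *v y \<in> S'"
    proof
      fix y assume y: "y \<in> S'"
      have "(A *v y) \<bullet> v = y \<bullet> (A *v v)" using sym_inner[OF sym, of y v] by simp
      also have "\<dots> = 0" using y unfolding S'_def Av by simp
      finally show "A *v y \<in> S'" using y inv unfolding S'_def by auto
    qed
    have "v \<notin> S'" using vv unfolding S'_def by auto
    then have "S' \<subset> S" using vS unfolding S'_def by blast
    then have "span S' \<subset> span S" using S S'sub by (simp add: span_eq_iff[THEN iffD2])
    then have "dim S' < dim S" by (rule dim_psubset)
    then obtain B' where B': "B' \<subseteq> S'" "pairwise orthogonal B'" "\<forall>b\<in>B'. norm b = 1"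
       "span B' = S'" "\<forall>b\<in>B'. A *v b = (b \<bullet> (A *v b)) *\<^sub>R b"
      using less.hyps[OF _ S'sub S'inv] by blast
    show ?thesis
    proof (intro exI[of _ "insert v B'"] conjI)
      show "insert v B' \<subseteq> S" using vS B'(1) unfolding S'_def by auto
      show "pairwise orthogonal (insert v B')"
        using B'(1,2) unfolding pairwise_insert S'_def orthogonal_def
        by (auto simp: inner_commute)
      show "\<forall>b\<in>insert v B'. norm b = 1" using nv B'(3) by auto
      show "\<forall>b\<in>insert v B'. A *v b = (b \<bullet> (A *v b)) *\<^sub>R b"
        using B'(5) Av vv unfolding m_def by auto
      show "span (insert v B') = S"
      proof
        show "span (insert v B') \<subseteq> S"
          apply (rule span_minimal[OF _ S]) using vS B'(1) unfolding S'_def by auto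
        show "S \<subseteq> span (insert v B')"
        proof
          fix y assume y: "y \<in> S"
          have "y - (y \<bullet> v) *\<^sub>R v \<in> S'" unfolding S'_def using y vS S vv
            by (simp add: subspace_diff subspace_scale inner_diff_left)
          then have "y - (y \<bullet> v) *\<^sub>R v \<in> span (insert v B')"
            using B'(4) span_mono[of B' "insert v B'"] by auto
          moreover have "(y \<bullet> v) *\<^sub>R v \<in> span (insert v B')"
            by (simp add: span_base span_scale)
          ultimately have "(y - (y \<bullet> v) *\<^sub>R v) + (y \<bullet> v) *\<^sub>R v \<in> span (insert v B')"
            by (rule span_add)
          then show "y \<in> span (insert v B')" by simp
        qed
      qed
    qed
  qed
qed

lemma spectral:
  fixes A :: "real^'n^'n"
  assumes sym: "transpose A = A"
  obtains B where "finite B" "pairwise orthogonal B" "\<forall>b\<in>B. norm b = 1" "span B = UNIV"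
    "\<forall>b\<in>B. A *v b = (b \<bullet> (A *v b)) *\<^sub>R b"
proof -
  obtain B where B: "pairwise orthogonal B" "\<forall>b\<in>B. norm b = 1" "span B = UNIV"
    "\<forall>b\<in>B. A *v b = (b \<bullet> (A *v b)) *\<^sub>R b"
    using spectral_sub[OF sym, of UNIV] by auto
  have "0 \<notin> B" using B(2) by force
  have "independent B" by (rule pairwise_orthogonal_independent[OF B(1) \<open>0 \<notin> B\<close>])
  then have "finite B" by (rule finiteI_independent)
  then show ?thesis using that B by blast
qed

definition onb :: "(real^'n) set \<Rightarrow> bool" where
  "onb B \<longleftrightarrow> finite B \<and> pairwise orthogonal B \<and> (\<forall>b\<in>B. norm b = 1) \<and> span B = UNIV"

lemma inner_sum_onb:
  assumes "onb B" "c \<in> B"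
  shows "c \<bullet> (\<Sum>b\<in>B. f b *\<^sub>R b) = f c"
proof -
  have "c \<bullet> (\<Sum>b\<in>B. f b *\<^sub>R b) = (\<Sum>b\<in>B. f b * (c \<bullet> b))"
    by (simp add: inner_sum_right)
  also have "\<dots> = (\<Sum>b\<in>B. if b = c then f c else 0)"
  proof (rule sum.cong)
    fix b assume b: "b \<in> B"
    show "f b * (c \<bullet> b) = (if b = c then f c else 0)"
    proof (cases "b = c")
      case True
      then have "c \<bullet> c = 1" using assms b unfolding onb_def by (simp add: norm_eq_1)
      then show ?thesis using True by simp
    next
      case False
      then have "c \<bullet> b = 0" using assms b unfolding onb_def pairwise_def orthogonal_def by auto
      then show ?thesis using False by simp
    qed
  qed simp
  also have "\<dots> = f c" using assms unfolding onb_def by simp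
  finally show ?thesis .
qed

lemma onb_expand:
  assumes "onb B"
  shows "x = (\<Sum>b\<in>B. (b \<bullet> x) *\<^sub>R b)"
proof -
  define y where "y = x - (\<Sum>b\<in>B. (b \<bullet> x) *\<^sub>R b)"
  have "orthogonal y c" if "c \<in> B" for c
    unfolding y_def orthogonal_def using inner_sum_onb[OF assms that, of "\<lambda>b. b \<bullet> x"]
    by (simp add: inner_diff_left inner_diff_right inner_commute)
  then have "orthogonal y y"
    using orthogonal_to_span[of y B y] assms unfolding onb_def by auto
  then have "y = 0" by (simp add: orthogonal_def)
  then show ?thesis unfolding y_def by simp
qed

lemma matvec_sum:
  fixes A :: "real^'n^'n"
  shows "A *v (\<Sum>b\<in>B. f b *\<^sub>R g b) = (\<Sum>b\<in>B. f b *\<^sub>R (A *v g b))"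
  by (simp add: linear_sum[OF matrix_vector_mul_linear] matrix_vector_mult_scaleR)

lemma matpow_expand:
  fixes A :: "real^'n^'n"
  assumes "onb B" and eig: "\<forall>b\<in>B. A *v b = (b \<bullet> (A *v b)) *\<^sub>R b"
  shows "matpow A k *v x = (\<Sum>b\<in>B. ((b \<bullet> (A *v b))^k * (b \<bullet> x)) *\<^sub>R b)"
proof (induction k)
  case 0
  then show ?case using onb_expand[OF assms(1), of x] by simp
next
  case (Suc k)
  have "matpow A (Suc k) *v x = A *v (matpow A k *v x)"
    by (simp add: matrix_vector_mul_assoc)
  also have "\<dots> = (\<Sum>b\<in>B. ((b \<bullet> (A *v b))^k * (b \<bullet> x)) *\<^sub>R (A *v b))"
    unfolding Suc by (rule matvec_sum)
  also have "\<dots> = (\<Sum>b\<in>B. ((b \<bullet> (A *v b))^Suc k * (b \<bullet> x)) *\<^sub>R b)"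
  proof (rule sum.cong)
    fix b assume b: "b \<in> B"
    define \<mu> where "\<mu> = b \<bullet> (A *v b)"
    have e: "A *v b = \<mu> *\<^sub>R b" using eig b unfolding \<mu>_def by auto
    show "((b \<bullet> (A *v b))^k * (b \<bullet> x)) *\<^sub>R (A *v b) = ((b \<bullet> (A *v b))^Suc k * (b \<bullet> x)) *\<^sub>R b"
      unfolding \<mu>_def[symmetric] unfolding e by (simp add: algebra_simps)
  qed simp
  finally show ?case .
qed

lemma entry_axis:
  fixes M :: "real^'n^'n"
  shows "M $ u $ u = (M *v axis u 1) $ u"
  by (simp add: matrix_vector_mult_def axis_def if_distrib cong: if_cong)

lemma matpow_entry:
  fixes A :: "real^'n^'n"
  assumes "onb B" and eig: "\<forall>b\<in>B. A *v b = (b \<bullet> (A *v b)) *\<^sub>R b"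
  shows "matpow A k $ u $ u = (\<Sum>b\<in>B. (b \<bullet> (A *v b))^k * (b $ u)^2)"
  unfolding entry_axis matpow_expand[OF assms]
  by (simp add: inner_axis power2_eq_square mult.assoc)

lemma exp_sums': "(\<lambda>n. (z::complex)^n / of_nat (fact n)) sums exp z"
proof -
  have "(\<lambda>n. z^n /\<^sub>R fact n) = (\<lambda>n. z^n / of_nat (fact n))"
    by (rule ext) (simp add: scaleR_conv_of_real divide_inverse mult.commute)
  then show ?thesis using exp_converges[of z] by simp
qed

lemma transition_sums:
  fixes A :: "real^'n^'n"
  assumes "onb B" and eig: "\<forall>b\<in>B. A *v b = (b \<bullet> (A *v b)) *\<^sub>R b"
  shows "(\<lambda>k. (\<i> * complex_of_real t) ^ k / of_nat (fact k) * complex_of_real (matpow A k $ u $ u))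
     sums (\<Sum>b\<in>B. complex_of_real ((b $ u)^2) * exp (\<i> * complex_of_real (t * (b \<bullet> (A *v b)))))"
proof -
  have "(\<lambda>k. \<Sum>b\<in>B. complex_of_real ((b $ u)^2) * ((\<i> * complex_of_real (t * (b \<bullet> (A *v b))))^k / of_nat (fact k)))
     sums (\<Sum>b\<in>B. complex_of_real ((b $ u)^2) * exp (\<i> * complex_of_real (t * (b \<bullet> (A *v b)))))"
    by (intro sums_sum sums_mult exp_sums')
  moreover have "(\<lambda>k. \<Sum>b\<in>B. complex_of_real ((b $ u)^2) * ((\<i> * complex_of_real (t * (b \<bullet> (A *v b))))^k / of_nat (fact k)))
     = (\<lambda>k. (\<i> * complex_of_real t) ^ k / of_nat (fact k) * complex_of_real (matpow A k $ u $ u))"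
  proof (rule ext)
    fix k
    show "(\<Sum>b\<in>B. complex_of_real ((b $ u)^2) * ((\<i> * complex_of_real (t * (b \<bullet> (A *v b))))^k / of_nat (fact k)))
     = (\<i> * complex_of_real t) ^ k / of_nat (fact k) * complex_of_real (matpow A k $ u $ u)"
      unfolding matpow_entry[OF assms] of_real_sum sum_distrib_left
      by (rule sum.cong) (simp_all add: power_mult_distrib algebra_simps)
  qed
  ultimately show ?thesis by simp
qed

lemma transition_formula:
  fixes A :: "real^'n^'n"
  assumes "onb B" and eig: "\<forall>b\<in>B. A *v b = (b \<bullet> (A *v b)) *\<^sub>R b"
  shows "transition A t u u = (\<Sum>b\<in>B. complex_of_real ((b $ u)^2) * exp (\<i> * complex_of_real (t * (b \<bullet> (A *v b)))))"
  unfolding transition_def using transition_sums[OF assms] by (rule sums_unique[symmetric])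

lemma Re_transition:
  fixes A :: "real^'n^'n"
  assumes "onb B" and eig: "\<forall>b\<in>B. A *v b = (b \<bullet> (A *v b)) *\<^sub>R b"
  shows "Re (transition A t u u) = (\<Sum>b\<in>B. (b $ u)^2 * cos (t * (b \<bullet> (A *v b))))"
    and "Im (transition A t u u) = (\<Sum>b\<in>B. (b $ u)^2 * sin (t * (b \<bullet> (A *v b))))"
  unfolding transition_formula[OF assms]
  by (simp_all add: Re_exp Im_exp)

lemma sum_a:
  fixes A :: "real^'n^'n"
  assumes "onb B" and eig: "\<forall>b\<in>B. A *v b = (b \<bullet> (A *v b)) *\<^sub>R b"
  shows "(\<Sum>b\<in>B. (b $ u)^2) = 1"
  using matpow_entry[OF assms, of 0 u] by (simp add: mat_def)

lemma proj_perp: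
  fixes R :: "real^'n^'n"
  assumes "R ** R = R" "transpose R = R"
  shows "(x - R *v x) \<bullet> (R *v w) = 0"
proof -
  have "(R *v x) \<bullet> (R *v w) = x \<bullet> (R *v (R *v w))"
    using sym_inner[OF assms(2), of x "R *v w"] by simp
  also have "\<dots> = x \<bullet> (R *v w)" by (simp add: matrix_vector_mul_assoc assms(1))
  finally show ?thesis by (simp add: inner_diff_left)
qed

lemma proj_unique:
  fixes P Q :: "real^'n^'n"
  assumes "P ** P = P" "transpose P = P" "Q ** Q = Q" "transpose Q = Q"
    and rg: "range (\<lambda>x. P *v x) = range (\<lambda>x. Q *v x)"
  shows "P = Q"
proof -
  have "P *v x = Q *v x" for x
  proof -
    obtain y where y: "P *v x = Q *v y" using rg by (metis rangeE rangeI)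
    define d where "d = P *v x - Q *v x"
    have dQ: "d = Q *v (y - x)" unfolding d_def y by (simp add: matrix_vector_mult_diff_distrib)
    then have "d \<in> range (\<lambda>x. P *v x)" using rg by auto
    then obtain z where dP: "d = P *v z" by auto
    have "d = (x - Q *v x) - (x - P *v x)" unfolding d_def by simp
    then have "d \<bullet> d = (x - Q *v x) \<bullet> d - (x - P *v x) \<bullet> d" by (simp add: inner_diff_left)
    also have "(x - Q *v x) \<bullet> d = 0" unfolding dQ by (rule proj_perp[OF assms(3,4)])
    also have "(x - P *v x) \<bullet> d = 0" unfolding dP by (rule proj_perp[OF assms(1,2)])
    finally have "d = 0" by simp
    then show ?thesis unfolding d_def by simp
  qed
  then show ?thesis by (simp add: matrix_eq)
qed

definition P0 :: "(real^'n) set \<Rightarrow> real^'n^'n \<Rightarrow> real^'n^'n" where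
  "P0 B A = (\<chi> i j. \<Sum>b\<in>{b\<in>B. b \<bullet> (A *v b) = 0}. b $ i * b $ j)"

lemma P0_mult:
  "P0 B A *v x = (\<Sum>b\<in>{b\<in>B. b \<bullet> (A *v b) = 0}. (b \<bullet> x) *\<^sub>R b)"
proof -
  let ?B0 = "{b\<in>B. b \<bullet> (A *v b) = 0}"
  have "(\<Sum>j\<in>UNIV. (\<Sum>b\<in>?B0. b $ i * b $ j) * x $ j) = (\<Sum>b\<in>?B0. (\<Sum>j\<in>UNIV. b $ j * x $ j) * b $ i)" for i
  proof -
    have "(\<Sum>j\<in>UNIV. (\<Sum>b\<in>?B0. b $ i * b $ j) * x $ j) = (\<Sum>j\<in>UNIV. \<Sum>b\<in>?B0. b $ i * b $ j * x $ j)"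
      by (simp only: sum_distrib_right)
    also have "\<dots> = (\<Sum>b\<in>?B0. \<Sum>j\<in>UNIV. b $ i * b $ j * x $ j)"
      by (rule sum.swap)
    also have "\<dots> = (\<Sum>b\<in>?B0. (\<Sum>j\<in>UNIV. b $ j * x $ j) * b $ i)"
      by (simp add: sum_distrib_right sum_distrib_left mult.commute mult.left_commute)
    finally show ?thesis .
  qed
  then show ?thesis
    unfolding P0_def by (simp add: vec_eq_iff matrix_vector_mult_def inner_vec_def)
qed

lemma P0_props:
  fixes A :: "real^'n^'n"
  assumes sym: "transpose A = A" and onb: "onb B" and eig: "\<forall>b\<in>B. A *v b = (b \<bullet> (A *v b)) *\<^sub>R b"
  shows "P0 B A ** P0 B A = P0 B A" "transpose (P0 B A) = P0 B A"
    "range (\<lambda>x. P0 B A *v x) = {x. A *v x = 0 *\<^sub>R x}"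
proof -
  let ?B0 = "{b\<in>B. b \<bullet> (A *v b) = 0}"
  have fin: "finite B" using onb unfolding onb_def by simp
  have fix0: "P0 B A *v z = z" if z: "A *v z = 0" for z
  proof -
    have "z = (\<Sum>b\<in>B. (b \<bullet> z) *\<^sub>R b)" by (rule onb_expand[OF onb])
    also have "\<dots> = (\<Sum>b\<in>?B0. (b \<bullet> z) *\<^sub>R b)"
    proof (rule sum.mono_neutral_right[OF fin])
      show "?B0 \<subseteq> B" by auto
      show "\<forall>b\<in>B - ?B0. (b \<bullet> z) *\<^sub>R b = 0"
      proof
        fix b assume b: "b \<in> B - ?B0"
        have "(b \<bullet> (A *v b)) * (b \<bullet> z) = (A *v b) \<bullet> z"
          using eig b by (metis (no_types, lifting) DiffD1 inner_scaleR_left)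
        also have "\<dots> = b \<bullet> (A *v z)" using sym_inner[OF sym, of b z] by simp
        also have "\<dots> = 0" using z by simp
        finally show "(b \<bullet> z) *\<^sub>R b = 0" using b by simp
      qed
    qed
    finally show ?thesis unfolding P0_mult by simp
  qed
  have inK: "A *v (P0 B A *v x) = 0" for x
  proof -
    have "A *v (P0 B A *v x) = (\<Sum>b\<in>?B0. (b \<bullet> x) *\<^sub>R (A *v b))"
      unfolding P0_mult by (rule matvec_sum)
    also have "\<dots> = 0"
    proof (rule sum.neutral, rule ballI)
      fix b assume b: "b \<in> ?B0"
      then have "A *v b = 0" using eig by (metis (mono_tags, lifting) mem_Collect_eq scale_zero_left)
      then show "(b \<bullet> x) *\<^sub>R (A *v b) = 0" by simp
    qed
    finally show ?thesis .
  qed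
  show "range (\<lambda>x. P0 B A *v x) = {x. A *v x = 0 *\<^sub>R x}"
  proof
    show "range (\<lambda>x. P0 B A *v x) \<subseteq> {x. A *v x = 0 *\<^sub>R x}" using inK by auto
    show "{x. A *v x = 0 *\<^sub>R x} \<subseteq> range (\<lambda>x. P0 B A *v x)"
      using fix0 by (metis (mono_tags, lifting) mem_Collect_eq rangeI scale_zero_left subsetI)
  qed
  show "P0 B A ** P0 B A = P0 B A"
    unfolding matrix_eq by (simp add: matrix_vector_mul_assoc[symmetric] fix0 inK)
  show "transpose (P0 B A) = P0 B A"
    unfolding P0_def transpose_def by (simp add: vec_eq_iff mult.commute)
qed

lemma eigproj0:
  fixes A :: "real^'n^'n"
  assumes sym: "transpose A = A" and onb: "onb B" and eig: "\<forall>b\<in>B. A *v b = (b \<bullet> (A *v b)) *\<^sub>R b"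
  shows "eigproj A 0 = P0 B A"
  unfolding eigproj_def
proof (rule the_equality)
  note pr = P0_props[OF assms]
  show "P0 B A ** P0 B A = P0 B A \<and> transpose (P0 B A) = P0 B A \<and>
    range ((*v) (P0 B A)) = {x. A *v x = 0 *\<^sub>R x}" using pr by simp
  fix P assume P: "P ** P = P \<and> transpose P = P \<and> range ((*v) P) = {x. A *v x = 0 *\<^sub>R x}"
  show "P = P0 B A"
    by (rule proj_unique) (use P pr in auto)
qed

lemma eigproj0_entry:
  fixes A :: "real^'n^'n"
  assumes sym: "transpose A = A" and onb: "onb B" and eig: "\<forall>b\<in>B. A *v b = (b \<bullet> (A *v b)) *\<^sub>R b"
  shows "eigproj A 0 $ u $ u = (\<Sum>b\<in>{b\<in>B. b \<bullet> (A *v b) = 0}. (b $ u)^2)"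
  unfolding eigproj0[OF assms] P0_def by (simp add: power2_eq_square)

lemma sum_pair_bool:
  "(\<Sum>r\<in>(UNIV::(bool\<times>'n::finite) set). f r) = (\<Sum>w\<in>UNIV. f (False,w)) + (\<Sum>w\<in>UNIV. f (True,w))"
proof -
  have "(\<Sum>r\<in>(UNIV::(bool\<times>'n) set). f r) = (\<Sum>r\<in>UNIV\<times>UNIV. f r)" by simp
  also have "\<dots> = (\<Sum>c\<in>UNIV. \<Sum>w\<in>UNIV. f (c,w))" by (simp add: sum.cartesian_product)
  also have "\<dots> = (\<Sum>w\<in>UNIV. f (False,w)) + (\<Sum>w\<in>UNIV. f (True,w))" by (simp add: UNIV_bool)
  finally show ?thesis .
qed

lemma matpow_double:
  fixes A :: "real^'n^'n"
  shows "matpow (bipartite_double A) k $ (b,v) $ (b',v') =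
     (if even k = (b = b') then 1 else 0) * matpow A k $ v $ v'"
proof (induction k arbitrary: b v)
  case 0
  then show ?case by (simp add: mat_def)
next
  case (Suc k)
  have "matpow (bipartite_double A) (Suc k) $ (b,v) $ (b',v') =
    (\<Sum>r\<in>UNIV. bipartite_double A $ (b,v) $ r * matpow (bipartite_double A) k $ r $ (b',v'))"
    by (simp add: matrix_matrix_mult_def)
  also have "\<dots> = (\<Sum>w\<in>UNIV. bipartite_double A $ (b,v) $ (False,w) * ((if even k = (False = b') then 1 else 0) * matpow A k $ w $ v'))
     + (\<Sum>w\<in>UNIV. bipartite_double A $ (b,v) $ (True,w) * ((if even k = (True = b') then 1 else 0) * matpow A k $ w $ v'))"
    by (simp add: sum_pair_bool Suc)
  also have "\<dots> = (if even (Suc k) = (b = b') then 1 else 0) * matpow A (Suc k) $ v $ v'"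
    by (cases b; cases b') (simp_all add: bipartite_double_def matrix_matrix_mult_def sum_distrib_left)
  finally show ?case .
qed

lemma i_pow_sq: "(\<i> ^ m)^2 = ((-1)^m :: complex)"
  by (metis i_even_power power_mult)

lemma Re_term:
  fixes t c :: real
  shows "(\<i> * complex_of_real t) ^ k / of_nat (fact k) * complex_of_real ((if even k then 1 else 0) * c)
     = complex_of_real (Re ((\<i> * complex_of_real t) ^ k / of_nat (fact k) * complex_of_real c))"
proof (cases "even k")
  case True
  then obtain m where k: "k = 2 * m" by blast
  have e: "(\<i> * complex_of_real t) ^ k = complex_of_real ((-1)^m * t^k)"
    unfolding k power_mult_distrib by (simp add: power_mult mult.commute[of 2] i_pow_sq)
  have "(\<i> * complex_of_real t) ^ k / of_nat (fact k) * complex_of_real c = complex_of_real ((-1)^m * t^k / fact k * c)"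
    unfolding e by simp
  then show ?thesis using True by (simp only: Re_complex_of_real if_True mult_1)
next
  case False
  then obtain m where k: "k = 2 * m + 1" using oddE by blast
  have e: "(\<i> * complex_of_real t) ^ k = \<i> * complex_of_real ((-1)^m * t^k)"
    unfolding k power_mult_distrib by (simp add: power_mult power_add mult.commute[of 2] i_pow_sq)
  have "(\<i> * complex_of_real t) ^ k / of_nat (fact k) * complex_of_real c = \<i> * complex_of_real ((-1)^m * t^k / fact k * c)"
    unfolding e by simp
  then have "Re ((\<i> * complex_of_real t) ^ k / of_nat (fact k) * complex_of_real c) = 0"
    by (simp only: Re_i_times Im_complex_of_real neg_0_equal_iff_equal)
  then show ?thesis using False by simp
qed

lemma transition_double:
  fixes A :: "real^'n^'n"
  assumes "summable (\<lambda>k. (\<i> * complex_of_real t) ^ k / of_nat (fact k) * complex_of_real (matpow A k $ u $ u))"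
  shows "transition (bipartite_double A) t (b,u) (b,u) = complex_of_real (Re (transition A t u u))"
proof -
  let ?f = "\<lambda>k. (\<i> * complex_of_real t) ^ k / of_nat (fact k) * complex_of_real (matpow A k $ u $ u)"
  have "?f sums transition A t u u" unfolding transition_def using assms by (rule summable_sums)
  then have "(\<lambda>k. Re (?f k)) sums Re (transition A t u u)" by (simp add: sums_complex_iff)
  then have "(\<lambda>k. complex_of_real (Re (?f k))) sums complex_of_real (Re (transition A t u u))"
    by (rule sums_of_real)
  moreover have "(\<lambda>k. complex_of_real (Re (?f k))) = (\<lambda>k. (\<i> * complex_of_real t) ^ k / of_nat (fact k) *
      complex_of_real (matpow (bipartite_double A) k $ (b,u) $ (b,u)))"
    by (rule ext) (simp only: matpow_double Re_term simp_thms)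
  ultimately show ?thesis unfolding transition_def by (simp add: sums_unique[symmetric])
qed

lemma sin_sq_le: "(sin (x::real))^2 \<le> 2 * (1 + cos x)"
proof -
  have "(sin x)^2 = 1 - (cos x)^2" using sin_cos_squared_add[of x] by linarith
  also have "\<dots> = (1 - cos x) * (1 + cos x)" by (simp add: power2_eq_square algebra_simps)
  also have "\<dots> \<le> 2 * (1 + cos x)"
    by (rule mult_right_mono) (use cos_ge_minus_one[of x] cos_le_one[of x] in linarith)+
  finally show ?thesis .
qed

lemma split_ineqs:
  fixes a \<mu> :: "'b \<Rightarrow> real" and t :: real
  assumes fin: "finite B" and apos: "\<forall>b\<in>B. a b \<ge> 0" and s1: "(\<Sum>b\<in>B. a b) = 1"
  defines "w0 \<equiv> (\<Sum>b\<in>{b\<in>B. \<mu> b = 0}. a b)"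
    and "R \<equiv> (\<Sum>b\<in>B. a b * cos (t * \<mu> b))"
    and "I \<equiv> (\<Sum>b\<in>B. a b * sin (t * \<mu> b))"
  shows "R \<ge> 2 * w0 - 1" "w0 \<le> 1" "w0 = 1/2 \<Longrightarrow> I^2 \<le> R"
proof -
  define B0 where "B0 = {b\<in>B. \<mu> b = 0}"
  define B1 where "B1 = {b\<in>B. \<mu> b \<noteq> 0}"
  have f0: "finite B0" "finite B1" using fin unfolding B0_def B1_def by auto
  have spl: "(\<Sum>b\<in>B. f b) = (\<Sum>b\<in>B0. f b) + (\<Sum>b\<in>B1. f b)" for f :: "'b \<Rightarrow> real"
  proof -
    have "B = B0 \<union> B1" "B0 \<inter> B1 = {}" unfolding B0_def B1_def by auto
    then show ?thesis using sum.union_disjoint[OF f0] by metis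
  qed
  have w0: "w0 = (\<Sum>b\<in>B0. a b)" unfolding w0_def B0_def ..
  have a1: "(\<Sum>b\<in>B1. a b) = 1 - w0" using spl[of a] s1 w0 by simp
  have R: "R = w0 + (\<Sum>b\<in>B1. a b * cos (t * \<mu> b))"
    unfolding R_def spl[of "\<lambda>b. a b * cos (t * \<mu> b)"] w0 by (simp add: B0_def)
  have I: "I = (\<Sum>b\<in>B1. a b * sin (t * \<mu> b))"
    unfolding I_def spl[of "\<lambda>b. a b * sin (t * \<mu> b)"] by (simp add: B0_def)
  have ap1: "\<forall>b\<in>B1. a b \<ge> 0" using apos unfolding B1_def by auto
  have "(\<Sum>b\<in>B1. a b * cos (t * \<mu> b)) \<ge> (\<Sum>b\<in>B1. - a b)"
  proof (rule sum_mono)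
    fix b assume b: "b \<in> B1"
    have "a b * (-1) \<le> a b * cos (t * \<mu> b)"
      by (rule mult_left_mono) (use ap1 b in auto)
    then show "- a b \<le> a b * cos (t * \<mu> b)" by simp
  qed
  then show "R \<ge> 2 * w0 - 1" unfolding R using a1 by (simp add: sum_negf)
  have "(\<Sum>b\<in>B1. a b) \<ge> 0" using ap1 by (simp add: sum_nonneg)
  then show "w0 \<le> 1" using a1 by simp
  assume h: "w0 = 1/2"
  have R2: "R = (\<Sum>b\<in>B1. a b * (1 + cos (t * \<mu> b)))"
    unfolding R using a1 h by (simp add: algebra_simps sum.distrib)
  have "I^2 = (\<Sum>b\<in>B1. sqrt (a b) * (sqrt (a b) * sin (t * \<mu> b)))^2"
    unfolding I by (rule arg_cong[where f="\<lambda>x. x^2"], rule sum.cong) (use ap1 in \<open>auto simp: real_sqrt_mult_self mult.assoc[symmetric]\<close>)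
  also have "\<dots> \<le> (\<Sum>b\<in>B1. (sqrt (a b))^2) * (\<Sum>b\<in>B1. (sqrt (a b) * sin (t * \<mu> b))^2)"
    by (rule Cauchy_Schwarz_ineq_sum)
  also have "\<dots> = (1/2) * (\<Sum>b\<in>B1. a b * (sin (t * \<mu> b))^2)"
    using a1 h ap1 by (simp add: power_mult_distrib)
  also have "\<dots> \<le> (1/2) * (\<Sum>b\<in>B1. a b * (2 * (1 + cos (t * \<mu> b))))"
    by (intro mult_left_mono sum_mono) (use ap1 sin_sq_le in auto)
  also have "\<dots> = R" unfolding R2 sum_distrib_left by (rule sum.cong) (simp_all add: algebra_simps)
  finally show "I^2 \<le> R" .
qed

lemma sedI:
  assumes "0 < C" "C \<le> 1" "\<forall>t>0. C \<le> cmod (transition M t v v)"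
  shows "sedentary M v"
  unfolding sedentary_def
proof (intro exI[of _ C] conjI)
  show "C \<le> (INF t\<in>{0<..}. cmod (transition M t v v))"
    by (rule cINF_greatest) (use assms in auto)
qed (use assms in auto)

lemma sedD:
  assumes "sedentary M v"
  obtains C where "0 < C" "C \<le> 1" "\<forall>t>0. C \<le> cmod (transition M t v v)"
proof -
  obtain C where C: "0 < C" "C \<le> 1" "(INF t\<in>{0<..}. cmod (transition M t v v)) \<ge> C"
    using assms unfolding sedentary_def by blast
  have "\<forall>t>0. C \<le> cmod (transition M t v v)"
  proof (intro allI impI)
    fix t :: real assume t: "t > 0"
    have "bdd_below ((\<lambda>t. cmod (transition M t v v)) ` {0<..})"
      by (rule bdd_belowI[of _ 0]) auto
    then have "(INF t\<in>{0<..}. cmod (transition M t v v)) \<le> cmod (transition M t v v)"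
      by (rule cINF_lower) (use t in simp)
    then show "C \<le> cmod (transition M t v v)" using C(3) by linarith
  qed
  then show ?thesis using that C by blast
qed

theorem theorem27:
  fixes A :: "real^'n^'n" and u :: 'n
  assumes "weighted_graph A" and "connected_graph A" and "\<not> bipartite A"
    and "0 \<in> eigsupport A u"
  shows "(eigproj A 0 $ u $ u > 1/2 \<longrightarrow>
            sedentary A u \<and> sedentary (bipartite_double A) (False, u)
                          \<and> sedentary (bipartite_double A) (True, u))
       \<and> (eigproj A 0 $ u $ u = 1/2 \<longrightarrow>
            (sedentary A u \<longleftrightarrow> sedentary (bipartite_double A) (False, u)
                                 \<and> sedentary (bipartite_double A) (True, u)))"
proof -
  have sym: "transpose A = A" using assms(1) unfolding weighted_graph_def by simp
  obtain B where fin: "finite B" and ortho: "pairwise orthogonal B" and nb: "\<forall>b\<in>B. norm b = 1"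
    and sp: "span B = UNIV" and eig: "\<forall>b\<in>B. A *v b = (b \<bullet> (A *v b)) *\<^sub>R b"
    using spectral[OF sym] by blast
  have onb: "onb B" unfolding onb_def using fin ortho nb sp by simp
  define \<mu> where "\<mu> = (\<lambda>b::real^'n. b \<bullet> (A *v b))"
  define a where "a = (\<lambda>b::real^'n. (b $ u)^2)"
  define w where "w = eigproj A 0 $ u $ u"
  define T where "T = (\<lambda>t. transition A t u u)"
  have apos: "\<forall>b\<in>B. a b \<ge> 0" unfolding a_def by simp
  have s1: "(\<Sum>b\<in>B. a b) = 1" unfolding a_def by (rule sum_a[OF onb eig])
  have w: "w = (\<Sum>b\<in>{b\<in>B. \<mu> b = 0}. a b)"
    unfolding w_def a_def \<mu>_def by (rule eigproj0_entry[OF sym onb eig])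
  have ReT: "Re (T t) = (\<Sum>b\<in>B. a b * cos (t * \<mu> b))" for t
    unfolding T_def a_def \<mu>_def by (rule Re_transition(1)[OF onb eig])
  have ImT: "Im (T t) = (\<Sum>b\<in>B. a b * sin (t * \<mu> b))" for t
    unfolding T_def a_def \<mu>_def by (rule Re_transition(2)[OF onb eig])
  have D: "cmod (transition (bipartite_double A) t (b,u) (b,u)) = \<bar>Re (T t)\<bar>" for t b
  proof -
    have "summable (\<lambda>k. (\<i> * complex_of_real t) ^ k / of_nat (fact k) * complex_of_real (matpow A k $ u $ u))"
      using transition_sums[OF onb eig] by (rule sums_summable)
    then show ?thesis unfolding T_def by (simp add: transition_double)
  qed
  have I1: "Re (T t) \<ge> 2 * w - 1" for t
    using split_ineqs(1)[OF fin apos s1, of \<mu> t] unfolding w ReT .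
  have I2: "w \<le> 1"
    using split_ineqs(2)[OF fin apos s1, of \<mu>] unfolding w .
  have I3: "w = 1/2 \<Longrightarrow> (Im (T t))^2 \<le> Re (T t)" for t
    using split_ineqs(3)[OF fin apos s1, of \<mu> t] unfolding w ReT ImT .
  have RT: "\<bar>Re (T t)\<bar> \<le> cmod (T t)" for t by (rule abs_Re_le_cmod)
  show ?thesis
  proof (intro conjI impI)
    assume h: "eigproj A 0 $ u $ u > 1/2"
    then have C0: "0 < 2 * w - 1" "2 * w - 1 \<le> 1" using I2 unfolding w_def by auto
    have b1: "\<forall>t>0. 2 * w - 1 \<le> \<bar>Re (T t)\<bar>" using I1 by (meson abs_ge_self order_trans)
    show "sedentary A u"
      by (rule sedI[OF C0]) (use b1 RT in \<open>auto simp: T_def intro: order_trans\<close>)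
    show "sedentary (bipartite_double A) (False, u)"
      by (rule sedI[OF C0]) (use b1 D in auto)
    show "sedentary (bipartite_double A) (True, u)"
      by (rule sedI[OF C0]) (use b1 D in auto)
  next
    assume h: "eigproj A 0 $ u $ u = 1/2"
    then have hw: "w = 1/2" unfolding w_def .
    show "sedentary A u \<longleftrightarrow> sedentary (bipartite_double A) (False, u) \<and> sedentary (bipartite_double A) (True, u)"
    proof
      assume "sedentary A u"
      then obtain C where C: "0 < C" "C \<le> 1" "\<forall>t>0. C \<le> cmod (T t)"
        unfolding T_def by (rule sedD)
      have lb: "C^2 / 2 \<le> \<bar>Re (T t)\<bar>" if t: "t > 0" for t
      proof -
        have R0: "Re (T t) \<ge> 0" using I1[of t] hw by simp
        have "C^2 \<le> (cmod (T t))^2" using C t by (intro power_mono) auto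
        also have "\<dots> = (Re (T t))^2 + (Im (T t))^2" by (rule cmod_power2)
        also have "\<dots> \<le> (Re (T t))^2 + Re (T t)" using I3[OF hw, of t] by simp
        finally have c2: "C^2 \<le> (Re (T t))^2 + Re (T t)" .
        have "C^2 \<le> 1" using C by (simp add: power_le_one)
        show ?thesis
        proof (cases "Re (T t) \<le> 1")
          case True
          then have "(Re (T t))^2 \<le> Re (T t)" using R0 by (simp add: power2_eq_square mult_left_le_one_le)
          then show ?thesis using c2 R0 by simp
        next
          case False
          then show ?thesis using \<open>C^2 \<le> 1\<close> by simp
        qed
      qed
      have "C^2 \<le> 1" using C power_le_one[of C 2] by simp
      then have C': "0 < C^2/2" "C^2/2 \<le> 1" using C by auto
      show "sedentary (bipartite_double A) (False, u) \<and> sedentary (bipartite_double A) (True, u)"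
        by (intro conjI; rule sedI[OF C']) (use lb D in auto)
    next
      assume "sedentary (bipartite_double A) (False, u) \<and> sedentary (bipartite_double A) (True, u)"
      then have "sedentary (bipartite_double A) (False, u)" by simp
      then obtain C where C: "0 < C" "C \<le> 1" "\<forall>t>0. C \<le> cmod (transition (bipartite_double A) t (False, u) (False, u))"
        by (rule sedD)
      show "sedentary A u"
        by (rule sedI[OF C(1,2)]) (use C(3) D RT in \<open>auto simp: T_def intro: order_trans\<close>)
    qed
  qed
qed

end
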